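(* Let $\mu$ be a Borel probability measure on $\mathbb{R}^d$ with $\operatorname{spt}(\mu)\subseteq[0,1]^d$. If $\mathcal{Z}(\mu)\neq\emptyset$, then $\operatorname{spt}(\mu)\subseteq[0,1]^d\setminus(0,1)^d$.
   Context: $\operatorname{spt}(\mu)$ is the support of $\mu$ (smallest closed set of full measure). $\widehat{\mu}(\xi)=\int e^{-2\pi i\xi\cdot x}d\mu(x)$ and $\mathcal{Z}(\mu)=\{\xi\in\mathbb{R}^d:\widehat{\mu}(\xi+k)=0\text{ for all }k\in\mathbb{Z}^d\}$. *)

theory Defs
  imports "HOL-Probability.Probability"
begin

definition spt :: "'a::topological_space measure \<Rightarrow> 'a set" where
  "spt M = \<Inter>{C. closed C \<and> emeasure M (space M - C) = 0}"

definition fourier :: "(real ^ 'n) measure \<Rightarrow> real ^ 'n \<Rightarrow> complex" where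
  "fourier M \<xi> = (LINT x|M. cis (- 2 * pi * (\<xi> \<bullet> x)))"

definition int_lattice :: "(real ^ 'n) set" where
  "int_lattice = {k. \<forall>i. k $ i \<in> \<int>}"

definition zero_set :: "(real ^ 'n) measure \<Rightarrow> (real ^ 'n) set" where
  "zero_set M = {\<xi>. \<forall>k \<in> int_lattice. fourier M (\<xi> + k) = 0}"

definition closed_unit_cube :: "(real ^ 'n) set" where
  "closed_unit_cube = {x. \<forall>i. 0 \<le> x $ i \<and> x $ i \<le> 1}"

definition open_unit_cube :: "(real ^ 'n) set" where
  "open_unit_cube = {x. \<forall>i. 0 < x $ i \<and> x $ i < 1}"

end

theory Submission
  imports Defs
begin

inductive trig :: "(real^'n \<Rightarrow> complex) \<Rightarrow> bool" where
  zero: "trig (\<lambda>x. 0)"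
| step: "trig q \<Longrightarrow> k \<in> int_lattice \<Longrightarrow> trig (\<lambda>x. q x + c * cis (2 * pi * (k \<bullet> x)))"

lemma lattice_add: "k \<in> int_lattice \<Longrightarrow> m \<in> int_lattice \<Longrightarrow> k + m \<in> int_lattice"
  by (auto simp: int_lattice_def)
lemma lattice_uminus: "k \<in> int_lattice \<Longrightarrow> - k \<in> int_lattice"
  by (auto simp: int_lattice_def)
lemma lattice_zero: "0 \<in> int_lattice"
  by (auto simp: int_lattice_def)
lemma lattice_axis: "axis j 1 \<in> int_lattice"
  by (auto simp: int_lattice_def axis_def)

lemma trig_add: "trig r \<Longrightarrow> trig q \<Longrightarrow> trig (\<lambda>x. q x + r x)"
proof (induction r rule: trig.induct)
  case zero then show ?case by simp
next
  case (step r k c)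
  have "trig (\<lambda>x. (q x + r x) + c * cis (2 * pi * (k \<bullet> x)))"
    using step by (intro trig.step) auto
  then show ?case by (simp add: add.assoc)
qed

lemma trig_cmul: "trig q \<Longrightarrow> m \<in> int_lattice \<Longrightarrow> trig (\<lambda>x. d * cis (2 * pi * (m \<bullet> x)) * q x)"
proof (induction q rule: trig.induct)
  case zero then show ?case by (simp add: trig.zero)
next
  case (step q k c)
  have "trig (\<lambda>x. d * cis (2 * pi * (m \<bullet> x)) * q x + (d * c) * cis (2 * pi * ((m + k) \<bullet> x)))"
    using step by (intro trig.step lattice_add) auto
  moreover have "cis (2 * pi * ((m + k) \<bullet> x)) = cis (2 * pi * (m \<bullet> x)) * cis (2 * pi * (k \<bullet> x))" for x
    by (simp add: inner_add_left distrib_left cis_mult)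
  ultimately show ?case by (simp add: algebra_simps)
qed

lemma trig_mult: "trig q \<Longrightarrow> trig r \<Longrightarrow> trig (\<lambda>x. q x * r x)"
proof (induction q rule: trig.induct)
  case zero then show ?case by (simp add: trig.zero)
next
  case (step q k c)
  have "trig (\<lambda>x. q x * r x + c * cis (2 * pi * (k \<bullet> x)) * r x)"
    using step by (intro trig_add trig_cmul) auto
  then show ?case by (simp add: algebra_simps)
qed

lemma trig_const: "trig (\<lambda>x. c)"
  using trig.step[OF trig.zero lattice_zero, of c] by simp

lemma trig_scale: "trig q \<Longrightarrow> trig (\<lambda>x. c * q x)"
  using trig_mult[OF trig_const] by blast

lemma trig_sum: "finite A \<Longrightarrow> (\<And>a. a \<in> A \<Longrightarrow> trig (h a)) \<Longrightarrow> trig (\<lambda>x. \<Sum>a\<in>A. h a x)"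
proof (induction A rule: finite_induct)
  case empty then show ?case by (simp add: trig.zero)
next
  case (insert a A) then show ?case by (simp add: trig_add)
qed

lemma trig_cont: "trig q \<Longrightarrow> continuous_on UNIV q \<and> (\<exists>B. \<forall>x. norm (q x) \<le> B)"
proof (induction q rule: trig.induct)
  case zero then show ?case by auto
next
  case (step q k c)
  then obtain B where B: "\<forall>x. norm (q x) \<le> B" by auto
  have "norm (q x + c * cis (2 * pi * (k \<bullet> x))) \<le> B + norm c" for x
    using B norm_triangle_ineq[of "q x" "c * cis (2 * pi * (k \<bullet> x))"]
    by (smt (verit) norm_cis norm_mult mult_cancel_left1)
  moreover have "continuous_on UNIV (\<lambda>x. q x + c * cis (2 * pi * (k \<bullet> x)))"
    using step by (intro continuous_intros) auto
  ultimately show ?case by blast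
qed


definition Phi :: "real^'n \<Rightarrow> (real^'n) \<times> (real^'n)" where
  "Phi x = ((\<chi> j. cos (2 * pi * x $ j)), (\<chi> j. sin (2 * pi * x $ j)))"

lemma cos_cis: "complex_of_real (cos t) = (1/2) * cis t + (1/2) * cis (- t)"
  by (simp add: complex_eq_iff)
lemma sin_cis: "complex_of_real (sin t) = (- \<i>/2) * cis t + (\<i>/2) * cis (- t)"
  by (simp add: complex_eq_iff)

lemma trig_cos: "trig (\<lambda>x::real^'n. complex_of_real (cos (2 * pi * x $ j)))"
proof -
  have "trig (\<lambda>x::real^'n. (0 + (1/2) * cis (2 * pi * (axis j 1 \<bullet> x))) + (1/2) * cis (2 * pi * ((- axis j 1) \<bullet> x)))"
    by (intro trig.step trig.zero lattice_axis lattice_uminus)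
  moreover have "(\<lambda>x::real^'n. (0 + (1/2) * cis (2 * pi * (axis j 1 \<bullet> x))) + (1/2) * cis (2 * pi * ((- axis j 1) \<bullet> x)))
     = (\<lambda>x. complex_of_real (cos (2 * pi * x $ j)))"
    by (rule ext, subst cos_cis) (simp add: inner_axis')
  ultimately show ?thesis by simp
qed

lemma trig_sin: "trig (\<lambda>x::real^'n. complex_of_real (sin (2 * pi * x $ j)))"
proof -
  have "trig (\<lambda>x::real^'n. (0 + (- \<i>/2) * cis (2 * pi * (axis j 1 \<bullet> x))) + (\<i>/2) * cis (2 * pi * ((- axis j 1) \<bullet> x)))"
    by (intro trig.step trig.zero lattice_axis lattice_uminus)
  moreover have "(\<lambda>x::real^'n. (0 + (- \<i>/2) * cis (2 * pi * (axis j 1 \<bullet> x))) + (\<i>/2) * cis (2 * pi * ((- axis j 1) \<bullet> x)))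
     = (\<lambda>x. complex_of_real (sin (2 * pi * x $ j)))"
    by (rule ext, subst sin_cis) (simp add: inner_axis')
  ultimately show ?thesis by simp
qed

lemma trig_Phi_Basis:
  assumes "b \<in> (Basis :: ((real^'n) \<times> (real^'n)) set)"
  shows "trig (\<lambda>x::real^'n. complex_of_real (Phi x \<bullet> b))"
proof -
  from assms consider u where "u \<in> Basis" "b = (u, 0)" | v where "v \<in> Basis" "b = (0, v)"
    unfolding Basis_prod_def by blast
  then show ?thesis
  proof cases
    case 1
    then obtain i where "u = axis i 1" unfolding Basis_vec_def by auto
    then show ?thesis using 1 trig_cos[of i] by (simp add: Phi_def inner_axis)
  next
    case 2
    then obtain i where "v = axis i 1" unfolding Basis_vec_def by auto
    then show ?thesis using 2 trig_sin[of i] by (simp add: Phi_def inner_axis)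
  qed
qed

lemma linear_real_repr:
  fixes f :: "'a::euclidean_space \<Rightarrow> real"
  assumes "linear f"
  shows "f x = (\<Sum>b\<in>Basis. (x \<bullet> b) * f b)"
proof -
  have "f x = f (\<Sum>b\<in>Basis. (x \<bullet> b) *\<^sub>R b)" by (simp add: euclidean_representation)
  also have "\<dots> = (\<Sum>b\<in>Basis. (x \<bullet> b) * f b)"
    using assms by (simp add: linear_sum linear_scale)
  finally show ?thesis .
qed

lemma trig_poly:
  "real_polynomial_function p \<Longrightarrow> trig (\<lambda>x::real^'n. complex_of_real (p (Phi x)))"
proof (induction p rule: real_polynomial_function.induct)
  case (linear f)
  have "trig (\<lambda>x::real^'n. \<Sum>b\<in>Basis. complex_of_real (Phi x \<bullet> b) * complex_of_real (f b))"
    by (intro trig_sum trig_mult trig_Phi_Basis trig_const) auto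
  moreover have "(\<lambda>x::real^'n. \<Sum>b\<in>Basis. complex_of_real (Phi x \<bullet> b) * complex_of_real (f b))
     = (\<lambda>x. complex_of_real (f (Phi x)))"
  proof
    fix x :: "real^'n"
    show "(\<Sum>b\<in>Basis. complex_of_real (Phi x \<bullet> b) * complex_of_real (f b)) = complex_of_real (f (Phi x))"
      by (subst linear_real_repr[OF bounded_linear.linear[OF linear.hyps], of "Phi x"]) simp
  qed
  ultimately show ?case by simp
next
  case (const c) then show ?case by (simp add: trig_const)
next
  case (add f g) then show ?case by (simp add: trig_add)
next
  case (mult f g) then show ?case by (simp add: trig_mult)
qed


lemma meas_cont:
  assumes "sets \<mu> = sets borel" "continuous_on UNIV h"
  shows "h \<in> borel_measurable \<mu>"
  by (subst measurable_cong_sets[OF assms(1) refl]) (rule borel_measurable_continuous_onI[OF assms(2)])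

lemma integ_cont:
  fixes h :: "'a::euclidean_space \<Rightarrow> 'b::{banach,second_countable_topology}"
  assumes "prob_space \<mu>" "sets \<mu> = sets borel" "continuous_on UNIV h" "\<And>x. norm (h x) \<le> B"
  shows "integrable \<mu> h"
proof -
  interpret prob_space \<mu> by fact
  show ?thesis
    by (rule integrable_const_bound[where B=B]) (use assms meas_cont in auto)
qed

lemma cis_cont: "continuous_on UNIV (\<lambda>x::real^'n. cis (a * (k \<bullet> x)))"
  by (intro continuous_intros)

lemma trig_int_zero:
  assumes "prob_space \<mu>" "sets \<mu> = sets borel" "\<xi> \<in> zero_set \<mu>" "trig q"
  shows "(LINT x|\<mu>. cis (-2*pi*(\<xi> \<bullet> x)) * q x) = 0"
  using assms(4)
proof (induction q rule: trig.induct)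
  case zero then show ?case by simp
next
  case (step q k c)
  obtain B where B: "\<And>x. norm (q x) \<le> B" and qc: "continuous_on UNIV q"
    using trig_cont[OF step.hyps(1)] by auto
  have i1: "integrable \<mu> (\<lambda>x. cis (-2*pi*(\<xi> \<bullet> x)) * q x)"
    by (rule integ_cont[OF assms(1,2), where B=B]) (auto intro!: continuous_intros qc simp: norm_mult B)
  have i2: "integrable \<mu> (\<lambda>x. c * cis (-2*pi*((\<xi> + - k) \<bullet> x)))"
    by (rule integ_cont[OF assms(1,2), where B="norm c"]) (auto intro!: continuous_intros simp: norm_mult)
  have eq: "cis (-2*pi*(\<xi> \<bullet> x)) * (q x + c * cis (2 * pi * (k \<bullet> x)))
      = cis (-2*pi*(\<xi> \<bullet> x)) * q x + c * cis (-2*pi*((\<xi> + - k) \<bullet> x))" for x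
  proof -
    have "cis (-2*pi*(\<xi> \<bullet> x)) * cis (2 * pi * (k \<bullet> x)) = cis (-2*pi*((\<xi> + - k) \<bullet> x))"
      by (simp add: cis_mult inner_add_left algebra_simps)
    then show ?thesis by (simp add: algebra_simps)
  qed
  have f0: "fourier \<mu> (\<xi> + - k) = 0"
    using assms(3) lattice_uminus[OF step.hyps(2)] unfolding zero_set_def by auto
  have "(LINT x|\<mu>. cis (-2*pi*(\<xi> \<bullet> x)) * (q x + c * cis (2 * pi * (k \<bullet> x))))
     = (LINT x|\<mu>. cis (-2*pi*(\<xi> \<bullet> x)) * q x) + (LINT x|\<mu>. c * cis (-2*pi*((\<xi> + - k) \<bullet> x)))"
    unfolding eq by (rule Bochner_Integration.integral_add[OF i1 i2])
  also have "(LINT x|\<mu>. c * cis (-2*pi*((\<xi> + - k) \<bullet> x))) = c * fourier \<mu> (\<xi> + - k)"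
    unfolding fourier_def by simp
  finally show ?case using step.IH f0 by simp
qed


lemma spt_AE:
  fixes \<mu> :: "'a::second_countable_topology measure"
  assumes "sets \<mu> = sets borel" "spt \<mu> \<subseteq> C"
  shows "AE x in \<mu>. x \<in> C"
proof -
  have sp: "space \<mu> = UNIV" using sets_eq_imp_space_eq[OF assms(1)] by simp
  define F where "F = {V. open V \<and> emeasure \<mu> V = 0}"
  have sub: "- C \<subseteq> \<Union>F"
  proof
    fix x assume "x \<in> - C"
    then have "x \<notin> spt \<mu>" using assms(2) by auto
    then obtain K where K: "closed K" "emeasure \<mu> (space \<mu> - K) = 0" "x \<notin> K"
      unfolding spt_def by auto
    then have "- K \<in> F" using sp by (auto simp: F_def Compl_eq_Diff_UNIV)
    then show "x \<in> \<Union>F" using K by auto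
  qed
  obtain F' where F': "F' \<subseteq> F" "countable F'" "\<Union>F' = \<Union>F"
    using Lindelof[of F] unfolding F_def by auto
  have "(\<Union>V\<in>F'. V) \<in> null_sets \<mu>"
  proof (rule null_sets_UN'[OF F'(2)])
    fix V assume "V \<in> F'"
    then have "open V" "emeasure \<mu> V = 0" using F' by (auto simp: F_def)
    then show "V \<in> null_sets \<mu>" by (intro null_setsI) (simp_all add: assms(1))
  qed
  then show ?thesis
    by (rule AE_I') (use sub F'(3) in auto)
qed

lemma fiber:
  assumes "x \<in> closed_unit_cube" "y \<in> closed_unit_cube" "Phi x = Phi y" "x \<noteq> y"
  shows "x \<notin> open_unit_cube"
proof -
  obtain j where j: "x $ j \<noteq> y $ j" using assms(4) by (auto simp: vec_eq_iff)
  have "cos (2 * pi * x $ j) = cos (2 * pi * y $ j)" "sin (2 * pi * x $ j) = sin (2 * pi * y $ j)"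
    using arg_cong[OF assms(3), of "\<lambda>p. fst p $ j"] arg_cong[OF assms(3), of "\<lambda>p. snd p $ j"]
    by (auto simp: Phi_def)
  then obtain n :: int where n: "2 * pi * x $ j = 2 * pi * y $ j + 2 * pi * n"
    using sin_cos_eq_iff by metis
  then have "(2 * pi) * x $ j = (2 * pi) * (y $ j + n)" by (simp add: distrib_left)
  then have n': "x $ j = y $ j + n" by simp
  have b: "0 \<le> x $ j" "x $ j \<le> 1" "0 \<le> y $ j" "y $ j \<le> 1"
    using assms(1,2) by (auto simp: closed_unit_cube_def)
  have "n \<noteq> 0" using j n' by auto
  moreover have "n \<le> 1" "n \<ge> -1" using b n' by linarith+
  ultimately have "n = 1 \<or> n = -1" by linarith
  then have "x $ j = 0 \<or> x $ j = 1" using b n' by auto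
  then have "\<not> (0 < x $ j \<and> x $ j < 1)" by auto
  then show ?thesis unfolding open_unit_cube_def by blast
qed


lemma quotient_cont:
  fixes \<Phi> :: "'a::metric_space \<Rightarrow> 'b::metric_space" and F :: "'b \<Rightarrow> 'c::metric_space"
  assumes "compact C" "continuous_on C \<Phi>" "continuous_on C G" "\<And>x. x \<in> C \<Longrightarrow> F (\<Phi> x) = G x"
  shows "continuous_on (\<Phi> ` C) F"
proof -
  have q: "quotient_map (top_of_set C) (top_of_set (\<Phi> ` C)) \<Phi>"
  proof (rule continuous_imp_quotient_map)
    show "continuous_map (top_of_set C) (top_of_set (\<Phi> ` C)) \<Phi>"
      unfolding continuous_map_in_subtopology using assms(2) by auto
    show "compact_space (top_of_set C)"
      by (rule compact_space_subtopology) (simp add: assms(1))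
    show "Hausdorff_space (top_of_set (\<Phi> ` C))"
      by (rule Hausdorff_space_subtopology) simp
    show "\<Phi> ` topspace (top_of_set C) = topspace (top_of_set (\<Phi> ` C))" by simp
  qed
  have "continuous_on C (F \<circ> \<Phi>)"
    by (rule continuous_on_eq[OF assms(3)]) (simp add: assms(4))
  then have "continuous_map (top_of_set C) euclidean (F \<circ> \<Phi>)"
    by (simp only: continuous_map_iff_continuous)
  then have "continuous_map (top_of_set (\<Phi> ` C)) euclidean F"
    by (rule continuous_compose_quotient_map[OF q])
  then show ?thesis by (simp only: continuous_map_iff_continuous)
qed

lemma bound_compact:
  fixes h :: "'a::metric_space \<Rightarrow> 'b::real_normed_vector"
  assumes "compact C" "continuous_on UNIV h"
  shows "\<exists>B. \<forall>x\<in>C. norm (h x) \<le> B"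
proof -
  have "compact (h ` C)"
    by (rule compact_continuous_image[OF continuous_on_subset[OF assms(2)] assms(1)]) auto
  then have "bounded (h ` C)" by (rule compact_imp_bounded)
  then show ?thesis by (auto simp: bounded_iff)
qed

lemma integ_C:
  fixes h :: "'a::euclidean_space \<Rightarrow> 'b::{banach,second_countable_topology}"
  assumes "prob_space \<mu>" "sets \<mu> = sets borel" "AE x in \<mu>. x \<in> C" "compact C" "continuous_on UNIV h"
  shows "integrable \<mu> h"
proof -
  interpret prob_space \<mu> by fact
  obtain B where B: "\<forall>x\<in>C. norm (h x) \<le> B" using bound_compact[OF assms(4,5)] by blast
  show ?thesis
  proof (rule integrable_const_bound[where B=B])
    show "AE x in \<mu>. norm (h x) \<le> B" using assms(3) by eventually_elim (simp add: B)
    show "h \<in> borel_measurable \<mu>" using meas_cont[OF assms(2,5)] .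
  qed
qed

theorem corollary3p4:
  fixes \<mu> :: "(real ^ 'n) measure"
  assumes "prob_space \<mu>"
    and "sets \<mu> = sets borel"
    and "spt \<mu> \<subseteq> closed_unit_cube"
    and "zero_set \<mu> \<noteq> {}"
  shows "spt \<mu> \<subseteq> closed_unit_cube - open_unit_cube"
proof -
  interpret prob_space \<mu> by fact
  define C :: "(real^'n) set" where "C = closed_unit_cube"
  define U :: "(real^'n) set" where "U = open_unit_cube"
  have C_eq: "C = cbox 0 1" by (auto simp: C_def closed_unit_cube_def mem_box_cart)
  have U_eq: "U = box 0 1" by (auto simp: U_def open_unit_cube_def mem_box_cart)
  have cC: "compact C" unfolding C_eq by (rule compact_cbox)
  have oU: "open U" unfolding U_eq by (rule open_box)
  obtain \<xi> where \<xi>: "\<xi> \<in> zero_set \<mu>" using assms(4) by blast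
  have sp: "space \<mu> = UNIV" using sets_eq_imp_space_eq[OF assms(2)] by simp
  have AEC: "AE x in \<mu>. x \<in> C" using spt_AE[OF assms(2,3)] by (simp add: C_def)
  define g where "g x = infdist x (- U)" for x
  have gc: "continuous_on UNIV g" unfolding g_def by (intro continuous_intros)
  have g0: "g x \<ge> 0" for x by (simp add: g_def infdist_nonneg)
  have gpos: "g x > 0" if "x \<in> U" for x
  proof -
    have "(0::real^'n) \<notin> U" by (simp add: U_def open_unit_cube_def)
    then have "- U \<noteq> {}" by blast
    then show ?thesis unfolding g_def using that oU by (intro infdist_pos_not_in_closed) auto
  qed
  have ig: "integrable \<mu> g" by (rule integ_C[OF assms(1,2) AEC cC gc])
  have small: "norm (LINT x|\<mu>. complex_of_real (g x)) \<le> e" if e: "e > 0" for e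
  proof -
    define G where "G x = complex_of_real (g x) * cis (2 * pi * (\<xi> \<bullet> x))" for x
    have Gc: "continuous_on UNIV G" unfolding G_def by (intro continuous_intros gc)
    define F where "F y = G (SOME x. x \<in> C \<and> Phi x = y)" for y
    have FG: "F (Phi x) = G x" if "x \<in> C" for x
    proof -
      define x' where "x' = (SOME x'. x' \<in> C \<and> Phi x' = Phi x)"
      have x': "x' \<in> C" "Phi x' = Phi x"
        unfolding x'_def using someI[of "\<lambda>x'. x' \<in> C \<and> Phi x' = Phi x" x] that by auto
      show ?thesis
      proof (cases "x' = x")
        case True then show ?thesis by (simp add: F_def x'_def[symmetric])
      next
        case False
        have "x' \<notin> U" "x \<notin> U" using fiber[OF _ _ x'(2) False] fiber[OF _ _ x'(2)[symmetric]] False x' that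
          by (auto simp: C_def U_def)
        then have "g x' = 0" "g x = 0" by (auto simp: g_def)
        then show ?thesis by (simp add: F_def x'_def[symmetric] G_def)
      qed
    qed
    have Phic: "continuous_on UNIV Phi" unfolding Phi_def by (intro continuous_intros)
    have Fc: "continuous_on (Phi ` C) F"
      by (rule quotient_cont[OF cC continuous_on_subset[OF Phic] continuous_on_subset[OF Gc] FG]) auto
    have cT: "compact (Phi ` C)"
      by (rule compact_continuous_image[OF continuous_on_subset[OF Phic] cC]) auto
    obtain P where P: "polynomial_function P" "\<And>y. y \<in> Phi ` C \<Longrightarrow> norm (F y - P y) < e"
      using Stone_Weierstrass_polynomial_function[OF cT Fc e] by blast
    have "real_polynomial_function (Re \<circ> P)" "real_polynomial_function (Im \<circ> P)"
      using P(1) bounded_linear_Re bounded_linear_Im unfolding polynomial_function_def by auto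
    then have "trig (\<lambda>x. complex_of_real ((Re \<circ> P) (Phi x)) + \<i> * complex_of_real ((Im \<circ> P) (Phi x)))"
      by (intro trig_add trig_scale trig_poly)
    moreover have "(\<lambda>x. complex_of_real ((Re \<circ> P) (Phi x)) + \<i> * complex_of_real ((Im \<circ> P) (Phi x))) = (\<lambda>x. P (Phi x))"
      by (rule ext) (simp add: complex_eq_iff)
    ultimately have tP: "trig (\<lambda>x. P (Phi x))" by simp
    obtain B where Pc: "continuous_on UNIV (\<lambda>x. P (Phi x))" using trig_cont[OF tP] by auto
    have i0: "(LINT x|\<mu>. cis (-2*pi*(\<xi> \<bullet> x)) * P (Phi x)) = 0"
      by (rule trig_int_zero[OF assms(1,2) \<xi> tP])
    have ci: "continuous_on UNIV (\<lambda>x. cis (-2*pi*(\<xi> \<bullet> x)) * P (Phi x))"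
      by (intro continuous_intros Pc)
    have i1: "integrable \<mu> (\<lambda>x. cis (-2*pi*(\<xi> \<bullet> x)) * P (Phi x))"
      by (rule integ_C[OF assms(1,2) AEC cC ci])
    have i2: "integrable \<mu> (\<lambda>x. complex_of_real (g x))"
      by (rule integ_C[OF assms(1,2) AEC cC]) (intro continuous_intros gc)
    have i3: "integrable \<mu> (\<lambda>x. complex_of_real (g x) - cis (-2*pi*(\<xi> \<bullet> x)) * P (Phi x))"
      by (rule Bochner_Integration.integrable_diff[OF i2 i1])
    have pt: "norm (complex_of_real (g x) - cis (-2*pi*(\<xi> \<bullet> x)) * P (Phi x)) < e" if "x \<in> C" for x
    proof -
      have "complex_of_real (g x) - cis (-2*pi*(\<xi> \<bullet> x)) * P (Phi x)
          = cis (-2*pi*(\<xi> \<bullet> x)) * (G x - P (Phi x))"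
      proof -
        have c1: "cis (-2*pi*(\<xi> \<bullet> x)) * cis (2 * pi * (\<xi> \<bullet> x)) = 1" by (simp add: cis_mult)
        have "cis (-2*pi*(\<xi> \<bullet> x)) * (complex_of_real (g x) * cis (2 * pi * (\<xi> \<bullet> x)) - P (Phi x))
          = complex_of_real (g x) * (cis (-2*pi*(\<xi> \<bullet> x)) * cis (2 * pi * (\<xi> \<bullet> x))) - cis (-2*pi*(\<xi> \<bullet> x)) * P (Phi x)"
          by (simp add: algebra_simps)
        then show ?thesis unfolding G_def c1 by simp
      qed
      then have "norm (complex_of_real (g x) - cis (-2*pi*(\<xi> \<bullet> x)) * P (Phi x)) = norm (F (Phi x) - P (Phi x))"
        by (simp add: norm_mult FG[OF that])
      also have "\<dots> < e" using P(2) that by auto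
      finally show ?thesis .
    qed
    have "(LINT x|\<mu>. complex_of_real (g x))
        = (LINT x|\<mu>. complex_of_real (g x) - cis (-2*pi*(\<xi> \<bullet> x)) * P (Phi x))"
      using Bochner_Integration.integral_diff[OF i2 i1] i0 by simp
    also have "norm \<dots> \<le> (LINT x|\<mu>. norm (complex_of_real (g x) - cis (-2*pi*(\<xi> \<bullet> x)) * P (Phi x)))"
      by (rule integral_norm_bound)
    also have "\<dots> \<le> (LINT x|\<mu>. e)"
    proof (rule integral_mono_AE)
      show "integrable \<mu> (\<lambda>x. norm (complex_of_real (g x) - cis (-2*pi*(\<xi> \<bullet> x)) * P (Phi x)))"
        by (rule integrable_norm[OF i3])
      show "AE x in \<mu>. norm (complex_of_real (g x) - cis (-2*pi*(\<xi> \<bullet> x)) * P (Phi x)) \<le> e"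
        using AEC by eventually_elim (rule less_imp_le[OF pt])
      show "integrable \<mu> (\<lambda>x. e)" by simp
    qed
    also have "\<dots> = e" using prob_space by simp
    finally show ?thesis .
  qed
  have "norm (LINT x|\<mu>. complex_of_real (g x)) \<le> 0"
    using small by (rule field_le_epsilon[of _ 0]) simp
  then have "(LINT x|\<mu>. complex_of_real (g x)) = 0" by simp
  then have "(LINT x|\<mu>. g x) = 0" by simp
  then have "AE x in \<mu>. g x = 0"
    using integral_nonneg_eq_0_iff_AE[OF ig] g0 by simp
  then have "AE x in \<mu>. x \<notin> U" by eventually_elim (metis gpos less_irrefl)
  moreover have "{x \<in> space \<mu>. \<not> x \<notin> U} = U" using sp by auto
  moreover have "U \<in> sets \<mu>" using assms(2) borel_open[OF oU] by simp
  ultimately have "U \<in> null_sets \<mu>"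
    using AE_iff_null[of \<mu> "\<lambda>x. x \<notin> U"] by simp
  then have "emeasure \<mu> U = 0" by auto
  then have "spt \<mu> \<subseteq> - U"
  proof -
    have "UNIV - (UNIV - U) = U" by blast
    moreover have "closed (- U)" using oU by (rule closed_Compl)
    ultimately have "closed (- U) \<and> emeasure \<mu> (space \<mu> - (- U)) = 0"
      using oU sp \<open>emeasure \<mu> U = 0\<close> by (simp add: Compl_eq_Diff_UNIV closed_Compl)
    then show ?thesis unfolding spt_def by blast
  qed
  then show ?thesis using assms(3) by (auto simp: U_def)
qed

end
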